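(* Consider the binary adder MAC and, for $\alpha\in[0,\frac12]$, the auxiliary channel $p_\alpha(u|y)$ from $\mathcal Y=\{0,1,2\}$ to $\mathcal U=\{0,1\}$ with $p_\alpha(0|0)=1-\alpha$, $p_\alpha(1|0)=\alpha$, $p_\alpha(0|1)=p_\alpha(1|1)=\frac12$, $p_\alpha(1|2)=1-\alpha$, $p_\alpha(0|2)=\alpha$. For bit-pipe capacities $C_1,C_2\ge0$, consider the optimization $$\max_{p(x_1,x_2)}\ \min_{0\le\alpha\le\frac12}\ \min\left\{\begin{array}{l} C_1+C_2,\\ C_1+I(X_2;Y|X_1),\\ C_2+I(X_1;Y|X_2),\\ I(X_1X_2;Y),\\ \tfrac12\big(C_1+C_2+I(X_1X_2;Y|U)+I(X_1;U|X_2)+I(X_2;U|X_1)\big)\end{array}\right\}$$ over pmfs $p(x_1,x_2)$ on $\{0,1\}^2$, with quantities evaluated for $p(x_1,x_2)p(y|x_1,x_2)p_\alpha(u|y)$. Then there is an optimizing $p(x_1,x_2)$ that is a doubly symmetric binary source.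
   Context: The binary adder MAC has $\mathcal X_1=\mathcal X_2=\{0,1\}$, $\mathcal Y=\{0,1,2\}$ and $Y=X_1+X_2$ (deterministically). A pair $(X_1,X_2)$ is a doubly symmetric binary source with parameter $p$ if $p(0,0)=p(1,1)=\frac{1-p}{2}$ and $p(0,1)=p(1,0)=\frac p2$. Logarithms base 2. *)

theory Defs
  imports Complex_Main
begin

text \<open>Finite-alphabet entropy of a function f of a random variable Z with pmf P on finite support S
  (log base 2, convention 0 log 0 = 0).\<close>
definition ent :: "('z \<Rightarrow> real) \<Rightarrow> 'z set \<Rightarrow> ('z \<Rightarrow> 'v) \<Rightarrow> real" where
  "ent P S f = - (\<Sum>v\<in>f ` S. let q = (\<Sum>z\<in>{z\<in>S. f z = v}. P z) in
                     (if q = 0 then 0 else q * log 2 q))"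

definition cmi :: "('z \<Rightarrow> real) \<Rightarrow> 'z set \<Rightarrow> ('z \<Rightarrow> 'a) \<Rightarrow> ('z \<Rightarrow> 'b) \<Rightarrow> ('z \<Rightarrow> 'c) \<Rightarrow> real" where
  "cmi P S A B C = ent P S (\<lambda>z. (A z, C z)) + ent P S (\<lambda>z. (B z, C z))
                   - ent P S (\<lambda>z. (A z, B z, C z)) - ent P S C"

definition mi :: "('z \<Rightarrow> real) \<Rightarrow> 'z set \<Rightarrow> ('z \<Rightarrow> 'a) \<Rightarrow> ('z \<Rightarrow> 'b) \<Rightarrow> real" where
  "mi P S A B = cmi P S A B (\<lambda>z. ())"

text \<open>A pmf p(x1,x2) on {0,1}^2 (values outside {0,1}^2 are irrelevant).\<close>
definition is_pmf2 :: "(nat \<Rightarrow> nat \<Rightarrow> real) \<Rightarrow> bool" where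
  "is_pmf2 p \<longleftrightarrow> (\<forall>a\<in>{0,1}. \<forall>b\<in>{0,1}. p a b \<ge> 0) \<and> p 0 0 + p 0 1 + p 1 0 + p 1 1 = 1"

definition dsbs :: "(nat \<Rightarrow> nat \<Rightarrow> real) \<Rightarrow> bool" where
  "dsbs p \<longleftrightarrow> (\<exists>r::real. p 0 0 = (1 - r) / 2 \<and> p 1 1 = (1 - r) / 2 \<and> p 0 1 = r / 2 \<and> p 1 0 = r / 2)"

definition chan :: "real \<Rightarrow> nat \<Rightarrow> nat \<Rightarrow> real" where
  "chan \<alpha> y u =
     (if y = 0 then (if u = 0 then 1 - \<alpha> else if u = 1 then \<alpha> else 0)
      else if y = 1 then (if u \<in> {0,1} then 1/2 else 0)
      else if y = 2 then (if u = 1 then 1 - \<alpha> else if u = 0 then \<alpha> else 0)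
      else 0)"

definition SS :: "(nat \<times> nat \<times> nat \<times> nat) set" where
  "SS = {0,1} \<times> {0,1} \<times> {0,1,2} \<times> {0,1}"

definition joint :: "(nat \<Rightarrow> nat \<Rightarrow> real) \<Rightarrow> real \<Rightarrow> nat \<times> nat \<times> nat \<times> nat \<Rightarrow> real" where
  "joint p \<alpha> z = (case z of (x1, x2, y, u) \<Rightarrow>
       p x1 x2 * (if y = x1 + x2 then 1 else 0) * chan \<alpha> y u)"

definition X1 :: "nat \<times> nat \<times> nat \<times> nat \<Rightarrow> nat" where "X1 z = fst z"
definition X2 :: "nat \<times> nat \<times> nat \<times> nat \<Rightarrow> nat" where "X2 z = fst (snd z)"
definition Yv :: "nat \<times> nat \<times> nat \<times> nat \<Rightarrow> nat" where "Yv z = fst (snd (snd z))"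
definition Uv :: "nat \<times> nat \<times> nat \<times> nat \<Rightarrow> nat" where "Uv z = snd (snd (snd z))"

definition inner_obj :: "real \<Rightarrow> real \<Rightarrow> (nat \<Rightarrow> nat \<Rightarrow> real) \<Rightarrow> real \<Rightarrow> real" where
  "inner_obj C1 C2 p \<alpha> = (let P = joint p \<alpha> in
     min (C1 + C2)
      (min (C1 + cmi P SS X2 Yv X1)
       (min (C2 + cmi P SS X1 Yv X2)
        (min (mi P SS (\<lambda>z. (X1 z, X2 z)) Yv)
         ((C1 + C2 + cmi P SS (\<lambda>z. (X1 z, X2 z)) Yv Uv
               + cmi P SS X1 Uv X2 + cmi P SS X2 Uv X1) / 2)))))"

definition obj :: "real \<Rightarrow> real \<Rightarrow> (nat \<Rightarrow> nat \<Rightarrow> real) \<Rightarrow> real" where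
  "obj C1 C2 p = (INF \<alpha>\<in>{0..1/2}. inner_obj C1 C2 p \<alpha>)"

end

theory Submission imports Defs "HOL-Analysis.Analysis" "HOL-Real_Asymp.Real_Asymp" begin


definition L :: "real \<Rightarrow> real" where "L q = q * log 2 q"

definition cls :: "('z \<Rightarrow> real) \<Rightarrow> 'z set \<Rightarrow> ('z \<Rightarrow> 'v) \<Rightarrow> 'v \<Rightarrow> real" where
  "cls P S f v = (\<Sum>z\<in>{z\<in>S. f z = v}. P z)"

lemma ent_L: "ent P S f = - (\<Sum>v\<in>f`S. L (cls P S f v))"
  unfolding ent_def L_def cls_def Let_def by (intro arg_cong[where f=uminus] sum.cong) auto

lemma ent_cong: "(\<And>z. z \<in> S \<Longrightarrow> P z = Q z) \<Longrightarrow> ent P S f = ent Q S f"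
  unfolding ent_L cls_def by (intro arg_cong[where f=uminus] sum.cong refl arg_cong[where f=L]) auto

lemma ent_partition:
  assumes "\<And>z z'. z \<in> S \<Longrightarrow> z' \<in> S \<Longrightarrow> (f z = f z') = (g z = g z')"
  shows "ent P S f = ent P S g"
proof -
  define \<psi> where "\<psi> v = g (SOME z. z \<in> S \<and> f z = v)" for v
  have psi: "\<psi> (f z) = g z" if "z \<in> S" for z
  proof -
    have "\<exists>z'. z' \<in> S \<and> f z' = f z" using that by blast
    then have "(SOME z'. z' \<in> S \<and> f z' = f z) \<in> S \<and> f (SOME z'. z' \<in> S \<and> f z' = f z) = f z"
      by (rule someI_ex)
    then show ?thesis unfolding \<psi>_def using assms that by blast
  qed
  have inj: "inj_on \<psi> (f`S)"
    by (auto simp: inj_on_def psi assms)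
  have img: "g`S = \<psi>`(f`S)"
    by (auto simp: psi image_iff)
  have cl: "cls P S g (\<psi> v) = cls P S f v" if "v \<in> f`S" for v
  proof -
    obtain z0 where z0: "z0 \<in> S" "v = f z0" using \<open>v \<in> f`S\<close> by blast
    have "{z\<in>S. g z = \<psi> v} = {z\<in>S. f z = v}" using z0 psi assms by auto
    then show ?thesis unfolding cls_def by simp
  qed
  show ?thesis unfolding ent_L img sum.reindex[OF inj] using cl by (simp add: comp_def)
qed

lemma ent_support:
  assumes "finite S"
  shows "ent P S f = ent P {z\<in>S. P z \<noteq> 0} f"
proof -
  let ?S = "{z\<in>S. P z \<noteq> 0}"
  have c: "cls P S f v = cls P ?S f v" for v
    unfolding cls_def using assms by (intro sum.mono_neutral_right) auto
  have z: "cls P ?S f v = 0" if "v \<notin> f`?S" for v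
    unfolding cls_def using that by (intro sum.neutral) auto
  have "(\<Sum>v\<in>f`S. L (cls P S f v)) = (\<Sum>v\<in>f`?S. L (cls P ?S f v))"
    unfolding c using assms z by (intro sum.mono_neutral_right) (auto simp: L_def)
  then show ?thesis unfolding ent_L by simp
qed

lemma ent_bij:
  assumes "bij_betw \<pi> S S"
  shows "ent (\<lambda>z. P (\<pi> z)) S (\<lambda>z. f (\<pi> z)) = ent P S f"
proof -
  have im: "(\<lambda>z. f (\<pi> z))`S = f`S" using assms by (metis bij_betw_imp_surj_on image_image)
  have cl: "cls (\<lambda>z. P (\<pi> z)) S (\<lambda>z. f (\<pi> z)) v = cls P S f v" for v
  proof -
    have inj: "inj_on \<pi> {z\<in>S. f (\<pi> z) = v}" using assms by (auto simp: bij_betw_def inj_on_def)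
    have "\<pi> ` {z\<in>S. f (\<pi> z) = v} = {z\<in>S. f z = v}" using assms
      by (auto simp: bij_betw_def)
    then show ?thesis unfolding cls_def using sum.reindex[OF inj, of P] by (simp add: comp_def)
  qed
  show ?thesis unfolding ent_L im cl ..
qed



definition D :: "real \<Rightarrow> real \<Rightarrow> real" where "D x y = L ((x+y)/2) - (L x + L y)/2"
definition E :: "real \<Rightarrow> real \<Rightarrow> real" where "E x m = x * ln (x / m)"

lemma LS_pos:
  fixes a1 a2 b1 b2 :: real
  assumes "a1 > 0" "a2 > 0" "b1 > 0" "b2 > 0"
  shows "E (a1+a2) (b1+b2) \<le> E a1 b1 + E a2 b2"
proof -
  let ?A = "a1+a2" and ?B = "b1+b2"
  have k: "a * ln (a / b) - a * ln (?A/?B) \<ge> a - b * ?A / ?B" if "a > 0" "b > 0" for a b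
  proof -
    have t: "b * ?A / (a * ?B) > 0" using that assms by auto
    have "ln (b * ?A / (a * ?B)) \<le> b * ?A / (a * ?B) - 1" using ln_le_minus_one[OF t] .
    moreover have "ln (b * ?A / (a * ?B)) = - (ln (a/b) - ln (?A/?B))"
      using that assms by (simp add: ln_div ln_mult)
    ultimately have "ln (a/b) - ln (?A/?B) \<ge> 1 - b * ?A / (a * ?B)" by linarith
    then have "a * (ln (a/b) - ln (?A/?B)) \<ge> a * (1 - b * ?A / (a * ?B))"
      using that by (intro mult_left_mono) auto
    moreover have "a * (b * ?A / (a * ?B)) = b * ?A / ?B" using that by simp
    then have "a * (1 - b * ?A / (a * ?B)) = a - b * ?A / ?B" by (simp add: right_diff_distrib)
    ultimately show ?thesis by (simp add: algebra_simps)
  qed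
  have "a1 * ln (a1/b1) - a1 * ln (?A/?B) + (a2 * ln (a2/b2) - a2 * ln (?A/?B))
        \<ge> a1 - b1 * ?A / ?B + (a2 - b2 * ?A / ?B)"
    using k[of a1 b1] k[of a2 b2] assms by linarith
  moreover have "a1 - b1 * ?A / ?B + (a2 - b2 * ?A / ?B) = 0"
    using assms by (simp add: field_simps)
  ultimately have "a1 * ln (?A/?B) + a2 * ln (?A/?B) \<le> a1 * ln (a1/b1) + a2 * ln (a2/b2)" by linarith
  then show ?thesis unfolding E_def by (simp add: distrib_right)
qed

lemma LS:
  fixes a1 a2 b1 b2 :: real
  assumes "a1 \<ge> 0" "a2 \<ge> 0" "b1 \<ge> 0" "b2 \<ge> 0" "a1 > 0 \<Longrightarrow> b1 > 0" "a2 > 0 \<Longrightarrow> b2 > 0"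
  shows "E (a1+a2) (b1+b2) \<le> E a1 b1 + E a2 b2"
proof (cases "a1 = 0")
  case True
  show ?thesis
  proof (cases "a2 = 0")
    case True
    then show ?thesis using \<open>a1 = 0\<close> by (simp add: E_def)
  next
    case False
    then have "a2 > 0" "b2 > 0" using assms by auto
    then have "ln (a2/(b1+b2)) \<le> ln (a2/b2)" using assms by (auto intro: divide_left_mono)
    then show ?thesis using True \<open>a2 > 0\<close> by (simp add: E_def mult_left_mono)
  qed
next
  case False
  then have a1: "a1 > 0" "b1 > 0" using assms by auto
  show ?thesis
  proof (cases "a2 = 0")
    case True
    have "ln (a1/(b1+b2)) \<le> ln (a1/b1)" using assms a1 by (auto intro: divide_left_mono)
    then show ?thesis using True a1 by (simp add: E_def mult_left_mono)
  next
    case False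
    then show ?thesis using assms a1 by (intro LS_pos) auto
  qed
qed

lemma D_E:
  fixes x y :: real
  assumes "x \<ge> 0" "y \<ge> 0"
  shows "D x y = - (E x ((x+y)/2) + E y ((x+y)/2)) / (2 * ln 2)"
proof -
  have e: "E a ((x+y)/2) = a * ln a - a * ln ((x+y)/2)" if "a \<ge> 0" "a > 0 \<Longrightarrow> x + y > 0" for a
    using that by (cases "a = 0") (auto simp: E_def ln_div ln_mult algebra_simps)
  have m: "L ((x+y)/2) = (x+y)/2 * ln ((x+y)/2) / ln 2" by (simp add: L_def log_def)
  have ex: "E x ((x+y)/2) = x * ln x - x * ln ((x+y)/2)" by (rule e) (use assms in auto)
  have ey: "E y ((x+y)/2) = y * ln y - y * ln ((x+y)/2)" by (rule e) (use assms in auto)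
  show ?thesis unfolding D_def m ex ey
    by (simp add: L_def log_def field_simps)
qed

lemma aux_div: "T \<le> A + B \<Longrightarrow> c > 0 \<Longrightarrow> - A / c + - B / c \<le> - T / (c::real)"
  by (simp add: field_simps) (metis distrib_right mult_right_mono less_imp_le)

lemma SA:
  fixes x1 y1 x2 y2 :: real
  assumes "x1 \<ge> 0" "y1 \<ge> 0" "x2 \<ge> 0" "y2 \<ge> 0"
  shows "D x1 y1 + D x2 y2 \<le> D (x1+x2) (y1+y2)"
proof -
  have a: "E (x1+x2) ((x1+y1)/2 + (x2+y2)/2) \<le> E x1 ((x1+y1)/2) + E x2 ((x2+y2)/2)"
    using assms by (intro LS) auto
  have b: "E (y1+y2) ((x1+y1)/2 + (x2+y2)/2) \<le> E y1 ((x1+y1)/2) + E y2 ((x2+y2)/2)"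
    using assms by (intro LS) auto
  have eq: "(x1+y1)/2 + (x2+y2)/2 = (x1+x2+(y1+y2))/2" by (simp add: field_simps)
  have d3: "D (x1+x2) (y1+y2) = - (E (x1+x2) ((x1+x2+(y1+y2))/2) + E (y1+y2) ((x1+x2+(y1+y2))/2)) / (2 * ln 2)"
    by (rule D_E) (use assms in auto)
  define c where "c = 2 * ln (2::real)"
  have c: "c > 0" unfolding c_def by simp
  let ?A = "E x1 ((x1+y1)/2) + E y1 ((x1+y1)/2)"
  let ?B = "E x2 ((x2+y2)/2) + E y2 ((x2+y2)/2)"
  let ?T = "E (x1+x2) ((x1+x2+(y1+y2))/2) + E (y1+y2) ((x1+x2+(y1+y2))/2)"
  have "?T \<le> ?A + ?B" using a b unfolding eq by linarith
  then have "- ?A / c + - ?B / c \<le> - ?T / c" using c by (rule aux_div)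
  then show ?thesis unfolding D_E[OF assms(1,2)] D_E[OF assms(3,4)] d3 c_def .
qed

lemma K:
  assumes "finite A" "\<And>a. a \<in> A \<Longrightarrow> u a \<ge> 0 \<and> v a \<ge> (0::real)"
  shows "(\<Sum>a\<in>A. D (u a) (v a)) \<le> D (\<Sum>a\<in>A. u a) (\<Sum>a\<in>A. v a)"
  using assms
proof (induction A rule: finite_induct)
  case empty
  then show ?case by (simp add: D_def L_def)
next
  case (insert x F)
  have "(\<Sum>a\<in>insert x F. D (u a) (v a)) = D (u x) (v x) + (\<Sum>a\<in>F. D (u a) (v a))"
    using insert by simp
  also have "\<dots> \<le> D (u x) (v x) + D (\<Sum>a\<in>F. u a) (\<Sum>a\<in>F. v a)" using insert by simp
  also have "\<dots> \<le> D (u x + (\<Sum>a\<in>F. u a)) (v x + (\<Sum>a\<in>F. v a))"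
    using insert by (intro SA) (auto intro: sum_nonneg)
  finally show ?case using insert by simp
qed



lemma cond_rep:
  fixes f :: "'z \<Rightarrow> 'a" and g :: "'z \<Rightarrow> 'b" and S :: "'z set"
  assumes "finite S"
  defines "W \<equiv> (\<lambda>z. (f z, g z))`S"
  shows "ent P S (\<lambda>z. (f z, g z)) - ent P S g =
    (\<Sum>c\<in>g`S. L (\<Sum>w\<in>{w\<in>W. snd w = c}. cls P S (\<lambda>z. (f z, g z)) w)
               - (\<Sum>w\<in>{w\<in>W. snd w = c}. L (cls P S (\<lambda>z. (f z, g z)) w)))"
proof -
  let ?m = "cls P S (\<lambda>z. (f z, g z))"
  have fW: "finite W" unfolding W_def using assms by simp
  have c1: "cls P S g c = (\<Sum>w\<in>{w\<in>W. snd w = c}. ?m w)" for c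
  proof -
    have "cls P S g c = (\<Sum>w\<in>{w\<in>W. snd w = c}. sum P {z\<in>{z\<in>S. g z = c}. (f z, g z) = w})"
      unfolding cls_def using assms fW
      by (intro sum.group[symmetric]) (auto simp: W_def)
    also have "\<dots> = (\<Sum>w\<in>{w\<in>W. snd w = c}. ?m w)"
      unfolding cls_def by (intro sum.cong refl arg_cong[where f="sum P"]) auto
    finally show ?thesis .
  qed
  have c2: "(\<Sum>w\<in>W. L (?m w)) = (\<Sum>c\<in>g`S. \<Sum>w\<in>{w\<in>W. snd w = c}. L (?m w))"
    using assms fW by (intro sum.group[symmetric]) (auto simp: W_def)
  show ?thesis unfolding ent_L W_def[symmetric] c2 c1 by (simp add: sum_subtractf)
qed

lemma cond_concave:
  assumes "finite S" "\<And>z. z \<in> S \<Longrightarrow> P z \<ge> 0" "\<And>z. z \<in> S \<Longrightarrow> Q z \<ge> 0"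
  shows "(ent P S (\<lambda>z. (f z, g z)) - ent P S g) + (ent Q S (\<lambda>z. (f z, g z)) - ent Q S g)
     \<le> 2 * (ent (\<lambda>z. (P z + Q z)/2) S (\<lambda>z. (f z, g z)) - ent (\<lambda>z. (P z + Q z)/2) S g)"
proof -
  define W where "W = (\<lambda>z. (f z, g z))`S"
  let ?R = "\<lambda>z. (P z + Q z)/2"
  define u where "u = cls P S (\<lambda>z. (f z, g z))"
  define v where "v = cls Q S (\<lambda>z. (f z, g z))"
  have fW: "finite W" unfolding W_def using assms by simp
  have r: "cls ?R S (\<lambda>z. (f z, g z)) w = (u w + v w)/2" for w
    unfolding u_def v_def cls_def by (simp only: sum_divide_distrib[symmetric] sum.distrib)
  have u0: "u w \<ge> 0" for w unfolding u_def cls_def using assms by (intro sum_nonneg) auto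
  have v0: "v w \<ge> 0" for w unfolding v_def cls_def using assms by (intro sum_nonneg) auto
  let ?Wc = "\<lambda>c. {w\<in>W. snd w = c}"
  have fWc: "finite (?Wc c)" for c using fW by simp
  have per: "(L (\<Sum>w\<in>?Wc c. u w) - (\<Sum>w\<in>?Wc c. L (u w))) + (L (\<Sum>w\<in>?Wc c. v w) - (\<Sum>w\<in>?Wc c. L (v w)))
     \<le> 2 * (L (\<Sum>w\<in>?Wc c. (u w + v w)/2) - (\<Sum>w\<in>?Wc c. L ((u w + v w)/2)))" for c
  proof -
    have k: "(\<Sum>w\<in>?Wc c. D (u w) (v w)) \<le> D (\<Sum>w\<in>?Wc c. u w) (\<Sum>w\<in>?Wc c. v w)"
      using fWc u0 v0 by (intro K) auto
    have s: "(\<Sum>w\<in>?Wc c. (u w + v w)/2) = ((\<Sum>w\<in>?Wc c. u w) + (\<Sum>w\<in>?Wc c. v w))/2"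
      by (simp only: sum_divide_distrib[symmetric] sum.distrib)
    have d: "(\<Sum>w\<in>?Wc c. D (u w) (v w)) = (\<Sum>w\<in>?Wc c. L ((u w + v w)/2)) - ((\<Sum>w\<in>?Wc c. L (u w)) + (\<Sum>w\<in>?Wc c. L (v w)))/2"
      unfolding D_def sum_subtractf by (simp only: sum_divide_distrib[symmetric] sum.distrib)
    show ?thesis using k unfolding d s unfolding D_def by argo
  qed
  have "(ent P S (\<lambda>z. (f z, g z)) - ent P S g) + (ent Q S (\<lambda>z. (f z, g z)) - ent Q S g)
     = (\<Sum>c\<in>g`S. (L (\<Sum>w\<in>?Wc c. u w) - (\<Sum>w\<in>?Wc c. L (u w))) + (L (\<Sum>w\<in>?Wc c. v w) - (\<Sum>w\<in>?Wc c. L (v w))))"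
    unfolding cond_rep[OF assms(1)] u_def v_def W_def by (simp add: sum.distrib)
  also have "\<dots> \<le> (\<Sum>c\<in>g`S. 2 * (L (\<Sum>w\<in>?Wc c. (u w + v w)/2) - (\<Sum>w\<in>?Wc c. L ((u w + v w)/2))))"
    by (intro sum_mono per)
  also have "\<dots> = 2 * (ent ?R S (\<lambda>z. (f z, g z)) - ent ?R S g)"
    unfolding cond_rep[OF assms(1)] W_def[symmetric] r by (simp add: sum_distrib_left)
  finally show ?thesis .
qed



lemma SS_sum: "sum F SS = (\<Sum>x1\<in>{0,1}. \<Sum>x2\<in>{0,1}. \<Sum>y\<in>{0,1,2}. \<Sum>u\<in>{0,1}. F (x1,x2,y,u))"
  unfolding SS_def by (simp add: sum.cartesian_product add.assoc)

lemma finite_SS: "finite SS" unfolding SS_def by simp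

lemma cls_sum: "finite S \<Longrightarrow> cls P S f v = (\<Sum>z\<in>S. if f z = v then P z else 0)"
  unfolding cls_def by (simp add: sum.inter_filter)

definition flipz :: "nat \<times> nat \<times> nat \<times> nat \<Rightarrow> nat \<times> nat \<times> nat \<times> nat" where
  "flipz z = (1 - X1 z, 1 - X2 z, 2 - Yv z, 1 - Uv z)"

definition tau :: "(nat \<Rightarrow> nat \<Rightarrow> real) \<Rightarrow> nat \<Rightarrow> nat \<Rightarrow> real" where
  "tau p a b = p (1 - a) (1 - b)"

lemma SS_cases: "z \<in> SS \<Longrightarrow> (\<And>x1 x2 y u. z = (x1,x2,y,u) \<Longrightarrow> x1 \<in> {0,1} \<Longrightarrow> x2 \<in> {0,1} \<Longrightarrow> y \<in> {0,1,2} \<Longrightarrow> u \<in> {0,1} \<Longrightarrow> thesis) \<Longrightarrow> thesis"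
  unfolding SS_def by auto

lemma flipz_SS: assumes "z \<in> SS" shows "flipz z \<in> SS"
proof -
  obtain x1 x2 y u where z: "z = (x1,x2,y,u)" and h: "x1 \<in> {0,1}" "x2 \<in> {0,1}" "y \<in> {0,1,2}" "u \<in> {0,1}"
    using assms by (rule SS_cases)
  have "1-x1 \<in> {0,1}" "1-x2 \<in> {0,1}" "2-y \<in> {0,1,2}" "1-u \<in> {0,1}" using h by auto
  then show ?thesis unfolding z flipz_def X1_def X2_def Yv_def Uv_def SS_def
    by (simp only: fst_conv snd_conv mem_Times_iff)
qed

lemma flipz_flipz: "z \<in> SS \<Longrightarrow> flipz (flipz z) = z"
  by (erule SS_cases) (simp add: flipz_def X1_def X2_def Yv_def Uv_def, safe, simp_all)

lemma bij_flipz: "bij_betw flipz SS SS"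
  by (rule bij_betw_byWitness[where f'=flipz]) (auto simp: flipz_flipz flipz_SS)

lemma joint_flip: assumes "z \<in> SS" shows "joint (tau p) \<alpha> z = joint p \<alpha> (flipz z)"
proof -
  obtain x1 x2 y u where z: "z = (x1,x2,y,u)" and h: "x1 \<in> {0,1}" "x2 \<in> {0,1}" "y \<in> {0,1,2}" "u \<in> {0,1}"
    using assms by (rule SS_cases)
  have c: "chan \<alpha> (2 - y) (1 - u) = chan \<alpha> y u" using h by (auto simp: chan_def)
  have i: "(2 - y = 1 - x1 + (1 - x2)) = (y = x1 + x2)" using h by auto
  show ?thesis unfolding z flipz_def X1_def X2_def Yv_def Uv_def joint_def tau_def
    by (simp only: fst_conv snd_conv prod.case c i)
qed

definition fc :: "(nat \<times> nat \<times> nat \<times> nat \<Rightarrow> 'a) \<Rightarrow> bool" where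
  "fc f \<longleftrightarrow> (\<forall>z\<in>SS. \<forall>z'\<in>SS. (f (flipz z) = f (flipz z')) = (f z = f z'))"

lemma fc_pair[simp]: "fc f \<Longrightarrow> fc g \<Longrightarrow> fc (\<lambda>z. (f z, g z))"
  unfolding fc_def by simp
lemma fc_unit[simp]: "fc (\<lambda>z. ())" unfolding fc_def by auto
lemma SS_X1: "z \<in> SS \<Longrightarrow> X1 z \<le> 1" by (erule SS_cases) (auto simp: X1_def)
lemma SS_X2: "z \<in> SS \<Longrightarrow> X2 z \<le> 1" by (erule SS_cases) (auto simp: X2_def)
lemma SS_Yv: "z \<in> SS \<Longrightarrow> Yv z \<le> 2" by (erule SS_cases) (auto simp: Yv_def)
lemma SS_Uv: "z \<in> SS \<Longrightarrow> Uv z \<le> 1" by (erule SS_cases) (auto simp: Uv_def)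
lemma fc_X1[simp]: "fc X1"
  unfolding fc_def by (auto dest!: SS_X1 simp: flipz_def X1_def)
lemma fc_X2[simp]: "fc X2"
  unfolding fc_def by (auto dest!: SS_X2 simp: flipz_def X2_def X1_def)
lemma fc_Yv[simp]: "fc Yv"
  unfolding fc_def by (auto dest!: SS_Yv simp: flipz_def Yv_def X1_def X2_def)
lemma fc_Uv[simp]: "fc Uv"
  unfolding fc_def by (auto dest!: SS_Uv simp: flipz_def Uv_def X1_def X2_def Yv_def)

lemma ent_flip: "fc f \<Longrightarrow> ent (joint (tau p) \<alpha>) SS f = ent (joint p \<alpha>) SS f"
proof -
  assume f: "fc f"
  have "ent (joint (tau p) \<alpha>) SS f = ent (\<lambda>z. joint p \<alpha> (flipz z)) SS f"
    by (intro ent_cong joint_flip)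
  also have "\<dots> = ent (\<lambda>z. joint p \<alpha> (flipz z)) SS (\<lambda>z. f (flipz z))"
  proof (rule ent_partition)
    fix z z' assume "z \<in> SS" "z' \<in> SS"
    then have "(f (flipz z) = f (flipz z')) = (f z = f z')" using f unfolding fc_def by blast
    then show "(f z = f z') = (f (flipz z) = f (flipz z'))" by simp
  qed
  also have "\<dots> = ent (joint p \<alpha>) SS f" by (rule ent_bij[OF bij_flipz])
  finally show ?thesis .
qed

lemma cmi_flip: "fc A \<Longrightarrow> fc B \<Longrightarrow> fc C \<Longrightarrow>
  cmi (joint (tau p) \<alpha>) SS A B C = cmi (joint p \<alpha>) SS A B C"
  unfolding cmi_def by (simp only: ent_flip fc_pair)

lemma mi_flip: "fc A \<Longrightarrow> fc B \<Longrightarrow> mi (joint (tau p) \<alpha>) SS A B = mi (joint p \<alpha>) SS A B"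
  unfolding mi_def by (rule cmi_flip) auto

lemma inner_flip: "inner_obj C1 C2 (tau p) \<alpha> = inner_obj C1 C2 p \<alpha>"
proof -
  have x12: "fc (\<lambda>z. (X1 z, X2 z))" by simp
  show ?thesis unfolding inner_obj_def Let_def
    cmi_flip[OF fc_X2 fc_Yv fc_X1] cmi_flip[OF fc_X1 fc_Yv fc_X2] cmi_flip[OF x12 fc_Yv fc_Uv]
    cmi_flip[OF fc_X1 fc_Uv fc_X2] cmi_flip[OF fc_X2 fc_Uv fc_X1] mi_flip[OF x12 fc_Yv] ..
qed



definition good :: "(nat \<times> nat \<times> nat \<times> nat \<Rightarrow> real) \<Rightarrow> bool" where
  "good P \<longleftrightarrow> (\<forall>z\<in>SS. P z \<noteq> 0 \<longrightarrow> Yv z = X1 z + X2 z)"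

lemma good_joint: "good (joint q \<alpha>)"
  unfolding good_def joint_def X1_def X2_def Yv_def by (auto split: prod.splits if_splits)

lemma ent_good:
  assumes "good P"
    "\<And>z z'. z \<in> SS \<Longrightarrow> z' \<in> SS \<Longrightarrow> Yv z = X1 z + X2 z \<Longrightarrow> Yv z' = X1 z' + X2 z' \<Longrightarrow> (f z = f z') = (g z = g z')"
  shows "ent P SS f = ent P SS g"
proof -
  have "ent P SS f = ent P {z\<in>SS. P z \<noteq> 0} f" by (rule ent_support[OF finite_SS])
  also have "\<dots> = ent P {z\<in>SS. P z \<noteq> 0} g"
    by (rule ent_partition) (use assms in \<open>auto simp: good_def\<close>)
  also have "\<dots> = ent P SS g" by (rule ent_support[OF finite_SS, symmetric])
  finally show ?thesis .
qed

definition cH :: "(nat \<times> nat \<times> nat \<times> nat \<Rightarrow> real) \<Rightarrow> (nat \<times> nat \<times> nat \<times> nat \<Rightarrow> 'a) \<Rightarrow> (nat \<times> nat \<times> nat \<times> nat \<Rightarrow> 'b) \<Rightarrow> real" where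
  "cH P f g = ent P SS (\<lambda>z. (f z, g z)) - ent P SS g"

definition Bk :: "(nat \<times> nat \<times> nat \<times> nat \<Rightarrow> real) \<Rightarrow> real" where
  "Bk P = ent P SS (\<lambda>z. (X1 z, Uv z, X2 z)) - ent P SS (\<lambda>z. (X1 z, X2 z))"

lemma T2: "good P \<Longrightarrow> cmi P SS X2 Yv X1 = cH P Yv X1"
proof -
  assume g: "good P"
  have "ent P SS (\<lambda>z. (X2 z, Yv z, X1 z)) = ent P SS (\<lambda>z. (X2 z, X1 z))"
    by (rule ent_good[OF g]) auto
  then show ?thesis unfolding cmi_def cH_def by simp
qed

lemma T3: "good P \<Longrightarrow> cmi P SS X1 Yv X2 = cH P Yv X2"
proof -
  assume g: "good P"
  have "ent P SS (\<lambda>z. (X1 z, Yv z, X2 z)) = ent P SS (\<lambda>z. (X1 z, X2 z))"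
    by (rule ent_good[OF g]) auto
  then show ?thesis unfolding cmi_def cH_def by simp
qed

lemma T4: "good P \<Longrightarrow> mi P SS (\<lambda>z. (X1 z, X2 z)) Yv = cH P Yv (\<lambda>z. ())"
proof -
  assume g: "good P"
  have "ent P SS (\<lambda>z. ((X1 z, X2 z), Yv z, ())) = ent P SS (\<lambda>z. ((X1 z, X2 z), ()))"
    by (rule ent_good[OF g]) auto
  then show ?thesis unfolding mi_def cmi_def cH_def by simp
qed

lemma T5a: "good P \<Longrightarrow> cmi P SS (\<lambda>z. (X1 z, X2 z)) Yv Uv = cH P Yv Uv"
proof -
  assume g: "good P"
  have "ent P SS (\<lambda>z. ((X1 z, X2 z), Yv z, Uv z)) = ent P SS (\<lambda>z. ((X1 z, X2 z), Uv z))"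
    by (rule ent_good[OF g]) auto
  then show ?thesis unfolding cmi_def cH_def by simp
qed

lemma T5b: "cmi P SS X1 Uv X2 = cH P Uv X2 - Bk P"
  unfolding cmi_def cH_def Bk_def by simp

lemma T5c: "cmi P SS X2 Uv X1 = cH P Uv X1 - Bk P"
proof -
  have a: "ent P SS (\<lambda>z. (X2 z, Uv z, X1 z)) = ent P SS (\<lambda>z. (X1 z, Uv z, X2 z))"
    by (rule ent_partition) auto
  have b: "ent P SS (\<lambda>z. (X2 z, X1 z)) = ent P SS (\<lambda>z. (X1 z, X2 z))"
    by (rule ent_partition) auto
  show ?thesis unfolding cmi_def cH_def Bk_def a b by simp
qed

lemma L_mult: "x \<ge> 0 \<Longrightarrow> y \<ge> 0 \<Longrightarrow> L (x * y) = y * L x + x * L y"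
  by (cases "x = 0"; cases "y = 0") (auto simp: L_def log_mult algebra_simps)

lemma SS_mem: "((x1,x2,y,u) \<in> SS) = (x1 \<in> {0,1} \<and> x2 \<in> {0,1} \<and> y \<in> {0,1,2} \<and> u \<in> {0,1})"
  unfolding SS_def by (simp only: mem_Times_iff fst_conv snd_conv)

lemma sum01: "a \<in> {0::nat,1} \<Longrightarrow> b \<in> {0,1} \<Longrightarrow> a + b \<in> {0,1,2}" by auto

lemma cls_XUX:
  assumes "a \<in> {0,1}" "b \<in> {0,1}" "u \<in> {0,1}"
  shows "cls (joint q \<alpha>) SS (\<lambda>z. (X1 z, Uv z, X2 z)) (a,u,b) = q a b * chan \<alpha> (a+b) u"
proof -
  have set: "{z\<in>SS. (X1 z, Uv z, X2 z) = (a,u,b)} = (\<lambda>y. (a,b,y,u))`{0,1,2}"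
  proof
    show "{z\<in>SS. (X1 z, Uv z, X2 z) = (a,u,b)} \<subseteq> (\<lambda>y. (a,b,y,u))`{0,1,2}"
    proof
      fix z assume z: "z \<in> {z\<in>SS. (X1 z, Uv z, X2 z) = (a,u,b)}"
      obtain x1 x2 y u' where zd: "z = (x1,x2,y,u')" by (cases z) auto
      have h: "(x1,x2,y,u') \<in> SS" "x1 = a" "x2 = b" "u' = u" using z unfolding zd by (auto simp: X1_def X2_def Uv_def)
      have "y \<in> {0,1,2}" using h(1) unfolding SS_mem by blast
      with h show "z \<in> (\<lambda>y. (a,b,y,u))`{0,1,2}" unfolding zd by blast
    qed
    show "(\<lambda>y. (a,b,y,u))`{0,1,2} \<subseteq> {z\<in>SS. (X1 z, Uv z, X2 z) = (a,u,b)}"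
      using assms by (auto simp only: SS_mem X1_def X2_def Uv_def fst_conv snd_conv image_iff mem_Collect_eq)
  qed
  have inj: "inj_on (\<lambda>y. (a,b,y,u)) {0,1,2::nat}" by (auto simp: inj_on_def)
  have "cls (joint q \<alpha>) SS (\<lambda>z. (X1 z, Uv z, X2 z)) (a,u,b) = (\<Sum>y\<in>{0,1,2}. joint q \<alpha> (a,b,y,u))"
    unfolding cls_def set sum.reindex[OF inj] by (simp add: comp_def)
  also have "\<dots> = q a b * chan \<alpha> (a+b) u" using assms by (auto simp: joint_def)
  finally show ?thesis .
qed

lemma cls_XX:
  assumes "a \<in> {0,1}" "b \<in> {0,1}"
  shows "cls (joint q \<alpha>) SS (\<lambda>z. (X1 z, X2 z)) (a,b) = q a b"
proof -
  have set: "{z\<in>SS. (X1 z, X2 z) = (a,b)} = (\<lambda>(y,u). (a,b,y,u))`({0,1,2}\<times>{0,1})"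
  proof
    show "{z\<in>SS. (X1 z, X2 z) = (a,b)} \<subseteq> (\<lambda>(y,u). (a,b,y,u))`({0,1,2}\<times>{0,1})"
    proof
      fix z assume z: "z \<in> {z\<in>SS. (X1 z, X2 z) = (a,b)}"
      obtain x1 x2 y u' where zd: "z = (x1,x2,y,u')" by (cases z) auto
      have h: "(x1,x2,y,u') \<in> SS" "x1 = a" "x2 = b" using z unfolding zd by (auto simp: X1_def X2_def)
      have "y \<in> {0,1,2}" "u' \<in> {0,1}" using h(1) unfolding SS_mem by blast+
      with h show "z \<in> (\<lambda>(y,u). (a,b,y,u))`({0,1,2}\<times>{0,1})" unfolding zd
        by (intro image_eqI[where x="(y,u')"]) (simp_all only: mem_Times_iff fst_conv snd_conv prod.case)
    qed
    show "(\<lambda>(y,u). (a,b,y,u))`({0,1,2}\<times>{0,1}) \<subseteq> {z\<in>SS. (X1 z, X2 z) = (a,b)}"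
    proof
      fix z assume "z \<in> (\<lambda>(y,u). (a,b,y,u))`({0::nat,1,2}\<times>{0::nat,1})"
      then obtain pp where pp: "pp \<in> {0::nat,1,2}\<times>{0::nat,1}" "z = (case pp of (y,u) \<Rightarrow> (a,b,y,u))"
        by (rule imageE) 
      obtain y u where ppd: "pp = (y,u)" by (cases pp)
      have yu: "y \<in> {0,1,2}" "u \<in> {0,1}" using pp(1) unfolding ppd mem_Times_iff fst_conv snd_conv by blast+
      have zz: "z = (a,b,y,u)" using pp(2) unfolding ppd by simp
      have "(a,b,y,u) \<in> SS" unfolding SS_mem using assms yu by blast
      then show "z \<in> {z\<in>SS. (X1 z, X2 z) = (a,b)}" unfolding zz by (simp add: X1_def X2_def)
    qed
  qed
  have inj: "inj_on (\<lambda>(y,u). (a,b,y,u)) ({0,1,2::nat}\<times>{0,1::nat})" by (auto simp: inj_on_def)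
  have "cls (joint q \<alpha>) SS (\<lambda>z. (X1 z, X2 z)) (a,b) = (\<Sum>(y,u)\<in>{0,1,2}\<times>{0,1}. joint q \<alpha> (a,b,y,u))"
    unfolding cls_def set sum.reindex[OF inj] by (simp add: comp_def case_prod_unfold)
  also have "\<dots> = (\<Sum>y\<in>{0,1,2}. \<Sum>u\<in>{0,1}. joint q \<alpha> (a,b,y,u))"
    by (rule sum.cartesian_product[symmetric])
  also have "\<dots> = (\<Sum>y\<in>{0,1,2}. if y = a + b then q a b else 0)"
  proof (rule sum.cong[OF refl])
    fix y :: nat
    have c: "chan \<alpha> y 0 + chan \<alpha> y 1 = (if y \<in> {0,1,2} then 1 else 0)" by (simp add: chan_def)
    show "(\<Sum>u\<in>{0,1}. joint q \<alpha> (a,b,y,u)) = (if y = a + b then q a b else 0)"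
      using c sum01[OF assms] by (auto simp: joint_def distrib_left[symmetric])
  qed
  also have "\<dots> = q a b" using sum01[OF assms] by (simp add: sum.delta)
  finally show ?thesis .
qed

lemma img_XUX: "(\<lambda>z. (X1 z, Uv z, X2 z))`SS = {0,1}\<times>{0,1}\<times>{0,1}"
proof
  show "(\<lambda>z. (X1 z, Uv z, X2 z))`SS \<subseteq> {0,1}\<times>{0,1}\<times>{0,1}"
  proof
    fix w assume "w \<in> (\<lambda>z. (X1 z, Uv z, X2 z))`SS"
    then obtain x1 x2 y u where h: "(x1,x2,y,u) \<in> SS" "w = (x1,u,x2)"
      by (auto simp: X1_def X2_def Uv_def)
    have "x1 \<in> {0,1}" "x2 \<in> {0,1}" "u \<in> {0,1}" using h(1) unfolding SS_mem by blast+
    then show "w \<in> {0,1}\<times>{0,1}\<times>{0,1}" unfolding h(2) mem_Times_iff fst_conv snd_conv by blast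
  qed
  show "{0,1}\<times>{0,1}\<times>{0,1} \<subseteq> (\<lambda>z. (X1 z, Uv z, X2 z))`SS"
  proof
    fix w assume w: "w \<in> {0::nat,1}\<times>{0::nat,1}\<times>{0::nat,1}"
    obtain a u b where wd: "w = (a,u,b)" by (cases w) auto
    have ab: "a \<in> {0,1}" "b \<in> {0,1}" "u \<in> {0,1}" using w unfolding wd by auto
    have m: "(a,b,a+b,u) \<in> SS" unfolding SS_mem using ab sum01[OF ab(1,2)] by blast
    show "w \<in> (\<lambda>z. (X1 z, Uv z, X2 z))`SS"
      unfolding wd by (rule image_eqI[OF _ m]) (simp add: X1_def X2_def Uv_def)
  qed
qed

lemma img_XX: "(\<lambda>z. (X1 z, X2 z))`SS = {0,1}\<times>{0,1}"
proof
  show "(\<lambda>z. (X1 z, X2 z))`SS \<subseteq> {0,1}\<times>{0,1}"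
  proof
    fix w assume "w \<in> (\<lambda>z. (X1 z, X2 z))`SS"
    then obtain x1 x2 y u where h: "(x1,x2,y,u) \<in> SS" "w = (x1,x2)"
      by (auto simp: X1_def X2_def)
    have "x1 \<in> {0,1}" "x2 \<in> {0,1}" using h(1) unfolding SS_mem by blast+
    then show "w \<in> {0,1}\<times>{0,1}" unfolding h(2) mem_Times_iff fst_conv snd_conv by blast
  qed
  show "{0,1}\<times>{0,1} \<subseteq> (\<lambda>z. (X1 z, X2 z))`SS"
  proof
    fix w assume w: "w \<in> {0::nat,1}\<times>{0::nat,1}"
    obtain a b where wd: "w = (a,b)" by (cases w) auto
    have ab: "a \<in> {0,1}" "b \<in> {0,1}" using w unfolding wd by auto
    have m: "(a,b,a+b,0) \<in> SS" unfolding SS_mem using ab sum01[OF ab(1,2)] by blast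
    show "w \<in> (\<lambda>z. (X1 z, X2 z))`SS"
      unfolding wd by (rule image_eqI[OF _ m]) (simp add: X1_def X2_def)
  qed
qed

lemma sum_prod3: "finite A \<Longrightarrow> finite B \<Longrightarrow> finite C \<Longrightarrow> sum F (A\<times>B\<times>C) = (\<Sum>a\<in>A. \<Sum>b\<in>B. \<Sum>c\<in>C. F (a,b,c))"
  by (simp add: sum.cartesian_product)

lemma sum_prod2: "finite A \<Longrightarrow> finite B \<Longrightarrow> sum F (A\<times>B) = (\<Sum>a\<in>A. \<Sum>b\<in>B. F (a,b))"
  by (simp add: sum.cartesian_product)

lemma ent_XUX: "ent (joint q \<alpha>) SS (\<lambda>z. (X1 z, Uv z, X2 z)) =
   - (\<Sum>a\<in>{0,1}. \<Sum>u\<in>{0,1}. \<Sum>b\<in>{0,1}. L (q a b * chan \<alpha> (a+b) u))"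
  unfolding ent_L img_XUX sum_prod3[OF finite.insertI[OF finite.insertI[OF finite.emptyI]] finite.insertI[OF finite.insertI[OF finite.emptyI]] finite.insertI[OF finite.insertI[OF finite.emptyI]]]
  by (intro arg_cong[where f=uminus] sum.cong refl) (simp add: cls_XUX)

lemma ent_XX: "ent (joint q \<alpha>) SS (\<lambda>z. (X1 z, X2 z)) = - (\<Sum>a\<in>{0,1}. \<Sum>b\<in>{0,1}. L (q a b))"
  unfolding ent_L img_XX sum_prod2[OF finite.insertI[OF finite.insertI[OF finite.emptyI]] finite.insertI[OF finite.insertI[OF finite.emptyI]]]
  by (intro arg_cong[where f=uminus] sum.cong refl) (simp add: cls_XX)

definition Blin :: "(nat \<Rightarrow> nat \<Rightarrow> real) \<Rightarrow> real \<Rightarrow> real" where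
  "Blin q \<alpha> = - (\<Sum>a\<in>{0,1}. \<Sum>b\<in>{0,1}. q a b * (\<Sum>u\<in>{0,1}. L (chan \<alpha> (a+b) u)))"

lemma chan_nonneg: "0 \<le> \<alpha> \<Longrightarrow> \<alpha> \<le> 1 \<Longrightarrow> chan \<alpha> y u \<ge> 0"
  by (simp add: chan_def)

lemma chan_sum: "y \<in> {0,1,2} \<Longrightarrow> chan \<alpha> y 0 + chan \<alpha> y 1 = 1"
  by (auto simp: chan_def)

lemma Bk_joint:
  assumes "\<And>a b. a \<in> {0,1} \<Longrightarrow> b \<in> {0,1} \<Longrightarrow> q a b \<ge> 0" "0 \<le> \<alpha>" "\<alpha> \<le> 1"
  shows "Bk (joint q \<alpha>) = Blin q \<alpha>"
proof -
  have inner: "(\<Sum>u\<in>{0,1}. L (q a b * chan \<alpha> (a+b) u)) = L (q a b) + q a b * (\<Sum>u\<in>{0,1}. L (chan \<alpha> (a+b) u))"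
    if ab: "a \<in> {0,1}" "b \<in> {0,1}" for a b
  proof -
    have e: "L (q a b * chan \<alpha> (a+b) u) = chan \<alpha> (a+b) u * L (q a b) + q a b * L (chan \<alpha> (a+b) u)" for u
      using assms ab by (intro L_mult chan_nonneg) auto
    have cs: "chan \<alpha> (a+b) 0 + chan \<alpha> (a+b) 1 = 1" using chan_sum sum01[OF ab] by blast
    have "chan \<alpha> (a+b) 0 * L (q a b) + chan \<alpha> (a+b) 1 * L (q a b) = L (q a b)"
      using cs by (metis distrib_right mult_1)
    then show ?thesis using e[of 0] e[of 1] by (simp add: distrib_left)
  qed
  have "ent (joint q \<alpha>) SS (\<lambda>z. (X1 z, Uv z, X2 z)) = 
     - (\<Sum>a\<in>{0,1}. \<Sum>b\<in>{0,1}. \<Sum>u\<in>{0,1}. L (q a b * chan \<alpha> (a+b) u))"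
    unfolding ent_XUX by (subst (2) sum.swap) (rule refl)
  also have "\<dots> = - (\<Sum>a\<in>{0,1}. \<Sum>b\<in>{0,1}. L (q a b) + q a b * (\<Sum>u\<in>{0,1}. L (chan \<alpha> (a+b) u)))"
    by (intro arg_cong[where f=uminus] sum.cong refl inner)
  finally show ?thesis unfolding Bk_def ent_XX Blin_def by (simp add: sum.distrib)
qed



definition nn :: "(nat \<Rightarrow> nat \<Rightarrow> real) \<Rightarrow> bool" where
  "nn q \<longleftrightarrow> (\<forall>a\<in>{0,1}. \<forall>b\<in>{0,1}. q a b \<ge> 0)"

definition mid :: "(nat \<Rightarrow> nat \<Rightarrow> real) \<Rightarrow> nat \<Rightarrow> nat \<Rightarrow> real" where
  "mid p a b = (p a b + tau p a b) / 2"

lemma nn_tau: "nn p \<Longrightarrow> nn (tau p)"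
  unfolding nn_def tau_def by auto

lemma joint_mid: "joint (mid p) \<alpha> = (\<lambda>z. (joint p \<alpha> z + joint (tau p) \<alpha> z) / 2)"
  by (rule ext) (auto simp: joint_def mid_def field_simps split: prod.splits)

lemma joint_nn: "nn q \<Longrightarrow> 0 \<le> \<alpha> \<Longrightarrow> \<alpha> \<le> 1 \<Longrightarrow> z \<in> SS \<Longrightarrow> joint q \<alpha> z \<ge> 0"
proof -
  assume q: "nn q" and a: "0 \<le> \<alpha>" "\<alpha> \<le> 1" and z: "z \<in> SS"
  obtain x1 x2 y u where zd: "z = (x1,x2,y,u)" by (cases z) auto
  have "x1 \<in> {0,1}" "x2 \<in> {0,1}" using z unfolding zd SS_mem by blast+
  then have "q x1 x2 \<ge> 0" using q unfolding nn_def by blast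
  then show ?thesis unfolding zd joint_def using chan_nonneg[OF a] by simp
qed

lemma cH_flip: "fc f \<Longrightarrow> fc g \<Longrightarrow> cH (joint (tau p) \<alpha>) f g = cH (joint p \<alpha>) f g"
  unfolding cH_def by (simp add: ent_flip)

lemma cH_concave:
  assumes "nn p" "0 \<le> \<alpha>" "\<alpha> \<le> 1" "fc f" "fc g"
  shows "cH (joint p \<alpha>) f g \<le> cH (joint (mid p) \<alpha>) f g"
proof -
  have "cH (joint p \<alpha>) f g + cH (joint (tau p) \<alpha>) f g \<le> 2 * cH (joint (mid p) \<alpha>) f g"
    unfolding cH_def joint_mid
    by (rule cond_concave[OF finite_SS]) (use assms nn_tau joint_nn in auto)
  then show ?thesis using cH_flip[OF assms(4,5)] by simp
qed

lemma Blin_mid: "Blin (mid p) \<alpha> = (Blin p \<alpha> + Blin (tau p) \<alpha>) / 2"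
  unfolding Blin_def mid_def by (simp add: field_simps)

lemma Bk_mid:
  assumes "nn p" "0 \<le> \<alpha>" "\<alpha> \<le> 1"
  shows "Bk (joint (mid p) \<alpha>) = Bk (joint p \<alpha>)"
proof -
  have nm: "nn (mid p)" using assms(1) nn_tau[OF assms(1)] unfolding nn_def mid_def by auto
  have f: "Bk (joint (tau p) \<alpha>) = Bk (joint p \<alpha>)"
    unfolding Bk_def by (simp add: ent_flip)
  have "Bk (joint (mid p) \<alpha>) = Blin (mid p) \<alpha>" using nm assms by (intro Bk_joint) (auto simp: nn_def)
  also have "\<dots> = (Blin p \<alpha> + Blin (tau p) \<alpha>) / 2" by (rule Blin_mid)
  also have "Blin p \<alpha> = Bk (joint p \<alpha>)" using assms by (intro Bk_joint[symmetric]) (auto simp: nn_def)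
  also have "Blin (tau p) \<alpha> = Bk (joint (tau p) \<alpha>)" using assms nn_tau[OF assms(1)]
    by (intro Bk_joint[symmetric]) (auto simp: nn_def)
  finally show ?thesis unfolding f by simp
qed

lemma inner_mid:
  assumes "nn p" "0 \<le> \<alpha>" "\<alpha> \<le> 1"
  shows "inner_obj C1 C2 p \<alpha> \<le> inner_obj C1 C2 (mid p) \<alpha>"
proof -
  have x12: "fc (\<lambda>z. (X1 z, X2 z))" by simp
  note cc = cH_concave[OF assms]
  have a2: "cH (joint p \<alpha>) Yv X1 \<le> cH (joint (mid p) \<alpha>) Yv X1" by (rule cc) simp_all
  have a3: "cH (joint p \<alpha>) Yv X2 \<le> cH (joint (mid p) \<alpha>) Yv X2" by (rule cc) simp_all
  have a4: "cH (joint p \<alpha>) Yv (\<lambda>z. ()) \<le> cH (joint (mid p) \<alpha>) Yv (\<lambda>z. ())" by (rule cc) simp_all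
  have a5: "cH (joint p \<alpha>) Yv Uv \<le> cH (joint (mid p) \<alpha>) Yv Uv" by (rule cc) simp_all
  have a6: "cH (joint p \<alpha>) Uv X2 \<le> cH (joint (mid p) \<alpha>) Uv X2" by (rule cc) simp_all
  have a7: "cH (joint p \<alpha>) Uv X1 \<le> cH (joint (mid p) \<alpha>) Uv X1" by (rule cc) simp_all
  have b: "Bk (joint (mid p) \<alpha>) = Bk (joint p \<alpha>)" by (rule Bk_mid[OF assms])
  show ?thesis unfolding inner_obj_def Let_def T2[OF good_joint] T3[OF good_joint] T4[OF good_joint]
    T5a[OF good_joint] T5b T5c b
    by (intro min.mono order.refl add_left_mono divide_right_mono add_mono a2 a3 a4 a5 a6 a7 diff_right_mono) simp_all
qed



lemma usc_max:
  fixes F :: "real \<Rightarrow> 'b \<Rightarrow> real"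
  assumes A: "A \<noteq> {}"
    and cont: "\<And>a. a \<in> A \<Longrightarrow> continuous_on {0..1} (\<lambda>r. F r a)"
    and bb: "\<And>r. r \<in> {0..1} \<Longrightarrow> bdd_below ((F r) ` A)"
    and ub: "\<And>r a. r \<in> {0..1} \<Longrightarrow> a \<in> A \<Longrightarrow> F r a \<le> U"
  shows "\<exists>r\<in>{0..1}. \<forall>s\<in>{0..1}. (INF a\<in>A. F s a) \<le> (INF a\<in>A. F r a)"
proof -
  define G where "G s = (INF a\<in>A. F s a)" for s
  obtain a0 where a0: "a0 \<in> A" using A by blast
  have GU: "G s \<le> U" if "s \<in> {0..1}" for s
    unfolding G_def using cINF_lower[OF bb[OF that] a0] ub[OF that a0] by linarith
  have bG: "bdd_above (G ` {0..1})" using GU by (intro bdd_aboveI[where M=U]) auto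
  define M where "M = (SUP s\<in>{0..1}. G s)"
  have "\<forall>n. \<exists>s\<in>{0..1}. M - 1 / Suc n < G s"
  proof
    fix n :: nat
    have "M - 1 / Suc n < M" by simp
    then show "\<exists>s\<in>{0..1}. M - 1 / Suc n < G s" unfolding M_def
      using less_cSUP_iff[of "{0..1::real}" G] bG by auto
  qed
  then obtain s where s: "\<And>n. s n \<in> {0..1}" "\<And>n. M - 1 / Suc n < G (s n)" by metis
  have sc: "seq_compact {0..1::real}" by (rule compact_imp_seq_compact) simp
  have sall: "\<forall>n. s n \<in> {0..1}" using s(1) by blast
  obtain l h where l: "l \<in> {0..1}" "strict_mono h" "(s \<circ> h) \<longlonglongrightarrow> l"
    using seq_compactE[OF sc sall] by blast
  have Ml: "M \<le> F l a" if a: "a \<in> A" for a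
  proof -
    have t1: "(\<lambda>n. F ((s \<circ> h) n) a) \<longlonglongrightarrow> F l a"
      by (rule continuous_on_tendsto_compose[OF cont[OF a] l(3) l(1)]) (use s(1) in auto)
    have z: "(\<lambda>n. 1 / real (Suc n)) \<longlonglongrightarrow> 0"
      using LIMSEQ_inverse_real_of_nat by (simp add: inverse_eq_divide)
    have t2: "(\<lambda>n. M - 1 / Suc n) \<longlonglongrightarrow> M"
      using tendsto_diff[OF tendsto_const z, of M] by simp
    have le: "M - 1 / Suc n \<le> F ((s \<circ> h) n) a" for n
    proof -
      have "n \<le> h n" using l(2) by (rule seq_suble)
      then have "1 / real (Suc (h n)) \<le> 1 / Suc n" by (intro divide_left_mono) auto
      moreover have "M - 1 / Suc (h n) < G (s (h n))" by (rule s(2))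
      moreover have "G (s (h n)) \<le> F (s (h n)) a" unfolding G_def by (rule cINF_lower[OF bb[OF s(1)] a])
      ultimately show ?thesis by simp
    qed
    show ?thesis by (rule LIMSEQ_le[OF t2 t1]) (use le in auto)
  qed
  have "M \<le> G l" unfolding G_def by (rule cINF_greatest[OF A Ml])
  moreover have "G s' \<le> M" if "s' \<in> {0..1}" for s' unfolding M_def by (rule cSUP_upper[OF that bG])
  ultimately show ?thesis using l(1) unfolding G_def by force
qed



lemma xlnx_cont: "continuous_on {0..} (\<lambda>x::real. x * ln x)"
proof (rule continuous_on_eq_continuous_within[THEN iffD2], intro ballI)
  fix x :: real assume x: "x \<in> {0..}"
  show "continuous (at x within {0..}) (\<lambda>x. x * ln x)"
  proof (cases "x = 0")
    case True
    have "((\<lambda>x::real. x * ln x) \<longlongrightarrow> 0) (at_right 0)" by real_asymp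
    then show ?thesis unfolding True continuous_within at_within_Ici_at_right by simp
  next
    case False
    then have "x > 0" using x by simp
    then have "continuous (at x) (\<lambda>x. x * ln x)" by (intro continuous_intros) auto
    then show ?thesis using continuous_at_imp_continuous_at_within by blast
  qed
qed

lemma L_cont: "continuous_on {0..} L"
proof -
  have "continuous_on {0..} (\<lambda>x. (1 / ln (2::real)) * (x * ln x))" by (rule continuous_on_mult_left[OF xlnx_cont])
  moreover have "(\<lambda>x. (1 / ln (2::real)) * (x * ln x)) = L" by (rule ext) (simp add: L_def log_def)
  ultimately show ?thesis by metis
qed

lemma ent_cont:
  assumes "finite S" "\<And>z. z \<in> S \<Longrightarrow> continuous_on A (\<lambda>r. P r z)"
    "\<And>r z. r \<in> A \<Longrightarrow> z \<in> S \<Longrightarrow> P r z \<ge> 0"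
  shows "continuous_on A (\<lambda>r. ent (P r) S f)"
proof -
  have c: "continuous_on A (\<lambda>r. L (cls (P r) S f v))" for v
  proof (rule continuous_on_compose2[OF L_cont])
    show "continuous_on A (\<lambda>r. cls (P r) S f v)" unfolding cls_def
      using assms by (intro continuous_on_sum) auto
    show "(\<lambda>r. cls (P r) S f v) ` A \<subseteq> {0..}" unfolding cls_def using assms
      by (auto intro!: sum_nonneg)
  qed
  show ?thesis unfolding ent_L by (intro continuous_on_minus continuous_on_sum c)
qed

lemma L_bound:
  assumes "0 \<le> q" "q \<le> N"
  shows "\<bar>L q\<bar> \<le> 2 * (1 + N^2)"
proof -
  have l2: "ln (2::real) > 1/2" using ln_2_less_1 ln2_ge_two_thirds by linarith
  show ?thesis
  proof (cases "q \<le> 1")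
    case True
    show ?thesis
    proof (cases "q = 0")
      case True then show ?thesis by (simp add: L_def)
    next
      case False
      then have q0: "q > 0" using assms by simp
      have "ln (1/q) \<le> 1/q - 1" by (rule ln_le_minus_one) (use q0 in simp)
      then have "- ln q \<le> 1/q - 1" using q0 by (simp add: ln_div)
      then have "q * (- ln q) \<le> q * (1/q - 1)" using q0 by (intro mult_left_mono) auto
      then have a: "- (q * ln q) \<le> 1" using q0 True by (simp add: algebra_simps)
      have b: "q * ln q \<le> 0" using q0 True by (simp add: mult_nonneg_nonpos)
      have "\<bar>q * ln q\<bar> \<le> 1" using a b by linarith
      then have "\<bar>q * ln q\<bar> / ln 2 \<le> 1 / ln 2" using l2 by (intro divide_right_mono) auto
      also have "\<dots> \<le> 2" using l2 by (simp add: divide_simps)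
      also have "\<dots> \<le> 2 * (1 + N^2)" by simp
      finally show ?thesis by (simp add: L_def log_def abs_mult abs_div)
    qed
  next
    case False
    then have q1: "q \<ge> 1" by simp
    have "ln q \<le> q - 1" by (rule ln_le_minus_one) (use q1 in simp)
    then have a: "q * ln q \<le> q * q" using q1 by (intro mult_left_mono) auto
    have b: "q * ln q \<ge> 0" using q1 by simp
    have "q * q \<le> N^2" using assms q1 by (simp add: power2_eq_square mult_mono)
    then have c: "\<bar>q * ln q\<bar> \<le> N^2" using a b by linarith
    then have "\<bar>q * ln q\<bar> / ln 2 \<le> N^2 / ln 2" using l2 by (intro divide_right_mono) auto
    also have "\<dots> \<le> 2 * N^2"
    proof -
      have "N^2 * 1 \<le> N^2 * (2 * ln 2)" using l2 by (intro mult_left_mono) auto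
      then show ?thesis using l2 by (simp add: divide_simps)
    qed
    also have "\<dots> \<le> 2 * (1 + N^2)" by simp
    finally show ?thesis by (simp add: L_def log_def abs_mult abs_div)
  qed
qed

lemma ent_bound:
  assumes "finite S" "\<And>z. z \<in> S \<Longrightarrow> 0 \<le> P z \<and> P z \<le> 1"
  shows "\<bar>ent P S f\<bar> \<le> real (card S) * (2 * (1 + (real (card S))^2))"
proof -
  let ?N = "real (card S)"
  have cb: "0 \<le> cls P S f v \<and> cls P S f v \<le> ?N" for v
  proof
    show "0 \<le> cls P S f v" unfolding cls_def using assms by (auto intro!: sum_nonneg)
    have "cls P S f v \<le> sum P S" unfolding cls_def using assms by (intro sum_mono2) auto
    also have "\<dots> \<le> (\<Sum>z\<in>S. 1)" using assms by (intro sum_mono) auto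
    finally show "cls P S f v \<le> ?N" by simp
  qed
  have "\<bar>ent P S f\<bar> \<le> (\<Sum>v\<in>f`S. \<bar>L (cls P S f v)\<bar>)" unfolding ent_L abs_minus_cancel by (rule sum_abs)
  also have "\<dots> \<le> (\<Sum>v\<in>f`S. 2 * (1 + ?N^2))" using cb by (intro sum_mono L_bound) auto
  also have "\<dots> = card (f`S) * (2 * (1 + ?N^2))" by simp
  also have "\<dots> \<le> ?N * (2 * (1 + ?N^2))" using card_image_le[OF assms(1), of f]
    by (intro mult_right_mono) auto
  finally show ?thesis .
qed



definition ds :: "real \<Rightarrow> nat \<Rightarrow> nat \<Rightarrow> real" where
  "ds r a b = (if a = b then (1 - r) / 2 else r / 2)"

lemma joint_cong:
  assumes "\<And>a b. a \<in> {0,1} \<Longrightarrow> b \<in> {0,1} \<Longrightarrow> p a b = q a b" "z \<in> SS"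
  shows "joint p \<alpha> z = joint q \<alpha> z"
proof -
  obtain x1 x2 y u where zd: "z = (x1,x2,y,u)" by (cases z) auto
  have "x1 \<in> {0,1}" "x2 \<in> {0,1}" using assms(2) unfolding zd SS_mem by blast+
  then show ?thesis unfolding zd joint_def using assms(1) by simp
qed

lemma inner_cong:
  assumes "\<And>a b. a \<in> {0,1} \<Longrightarrow> b \<in> {0,1} \<Longrightarrow> p a b = q a b"
  shows "inner_obj C1 C2 p \<alpha> = inner_obj C1 C2 q \<alpha>"
proof -
  have e: "ent (joint p \<alpha>) SS f = ent (joint q \<alpha>) SS f" for f :: "_ \<Rightarrow> 'x"
    by (rule ent_cong) (rule joint_cong[OF assms])
  show ?thesis unfolding inner_obj_def Let_def cmi_def mi_def e ..
qed

lemma obj_cong: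
  assumes "\<And>a b. a \<in> {0,1} \<Longrightarrow> b \<in> {0,1} \<Longrightarrow> p a b = q a b"
  shows "obj C1 C2 p = obj C1 C2 q"
  unfolding obj_def using inner_cong[OF assms] by simp

lemma mid_ds:
  assumes "is_pmf2 p" "a \<in> {0,1}" "b \<in> {0,1}"
  shows "mid p a b = ds (p 0 1 + p 1 0) a b"
  using assms unfolding is_pmf2_def mid_def tau_def ds_def by (auto simp: field_simps)

lemma pmf_le1: "is_pmf2 p \<Longrightarrow> a \<in> {0,1} \<Longrightarrow> b \<in> {0,1} \<Longrightarrow> p a b \<le> 1"
  unfolding is_pmf2_def by auto

lemma pmf_nn: "is_pmf2 p \<Longrightarrow> nn p"
  unfolding is_pmf2_def nn_def by auto

lemma joint_01:
  assumes "is_pmf2 q" "0 \<le> \<alpha>" "\<alpha> \<le> 1" "z \<in> SS"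
  shows "0 \<le> joint q \<alpha> z \<and> joint q \<alpha> z \<le> 1"
proof
  show "0 \<le> joint q \<alpha> z" by (rule joint_nn[OF pmf_nn[OF assms(1)] assms(2-4)])
  obtain x1 x2 y u where zd: "z = (x1,x2,y,u)" by (cases z) auto
  have x: "x1 \<in> {0,1}" "x2 \<in> {0,1}" using assms(4) unfolding zd SS_mem by blast+
  have q: "0 \<le> q x1 x2" "q x1 x2 \<le> 1" using pmf_le1[OF assms(1) x] pmf_nn[OF assms(1)] x
    unfolding nn_def by auto
  have c: "0 \<le> chan \<alpha> y u" "chan \<alpha> y u \<le> 1" using assms(2,3) by (auto simp: chan_def)
  have "q x1 x2 * chan \<alpha> y u \<le> 1 * 1" using q c by (intro mult_mono) auto
  then show "joint q \<alpha> z \<le> 1" unfolding zd joint_def by auto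
qed

definition EB :: real where "EB = real (card SS) * (2 * (1 + (real (card SS))^2))"

lemma cmi_lb: "\<forall>z\<in>SS. 0 \<le> P z \<and> P z \<le> 1 \<Longrightarrow> cmi P SS A B C \<ge> - 4 * EB"
  unfolding cmi_def EB_def using ent_bound[OF finite_SS, of P] by (smt (verit))

lemma mi_lb: "\<forall>z\<in>SS. 0 \<le> P z \<and> P z \<le> 1 \<Longrightarrow> mi P SS A B \<ge> - 4 * EB"
  unfolding mi_def by (rule cmi_lb)

lemma EB_nn: "EB \<ge> 0" unfolding EB_def by simp

lemma inner_lb:
  assumes "is_pmf2 q" "0 \<le> \<alpha>" "\<alpha> \<le> 1" "C1 \<ge> 0" "C2 \<ge> 0"
  shows "inner_obj C1 C2 q \<alpha> \<ge> - 6 * EB"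
proof -
  have P: "\<forall>z\<in>SS. 0 \<le> joint q \<alpha> z \<and> joint q \<alpha> z \<le> 1" using joint_01[OF assms(1-3)] by blast
  have c1: "cmi (joint q \<alpha>) SS X2 Yv X1 \<ge> - 4 * EB" by (rule cmi_lb[OF P])
  have c2: "cmi (joint q \<alpha>) SS X1 Yv X2 \<ge> - 4 * EB" by (rule cmi_lb[OF P])
  have c3: "mi (joint q \<alpha>) SS (\<lambda>z. (X1 z, X2 z)) Yv \<ge> - 4 * EB" by (rule mi_lb[OF P])
  have c4: "cmi (joint q \<alpha>) SS (\<lambda>z. (X1 z, X2 z)) Yv Uv \<ge> - 4 * EB" by (rule cmi_lb[OF P])
  have c5: "cmi (joint q \<alpha>) SS X1 Uv X2 \<ge> - 4 * EB" by (rule cmi_lb[OF P])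
  have c6: "cmi (joint q \<alpha>) SS X2 Uv X1 \<ge> - 4 * EB" by (rule cmi_lb[OF P])
  have e: "EB \<ge> 0" by (rule EB_nn)
  let ?X = "C1 + C2 + cmi (joint q \<alpha>) SS (\<lambda>z. (X1 z, X2 z)) Yv Uv + cmi (joint q \<alpha>) SS X1 Uv X2 + cmi (joint q \<alpha>) SS X2 Uv X1"
  have "- 12 * EB \<le> ?X" using c4 c5 c6 e assms(4,5) by linarith
  then have h5: "- 6 * EB \<le> ?X / 2" by simp
  have h1: "- 6 * EB \<le> C1 + C2" using e assms(4,5) by linarith
  have h2: "- 6 * EB \<le> C1 + cmi (joint q \<alpha>) SS X2 Yv X1" using c1 e assms(4,5) by linarith
  have h3: "- 6 * EB \<le> C2 + cmi (joint q \<alpha>) SS X1 Yv X2" using c2 e assms(4,5) by linarith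
  have h4: "- 6 * EB \<le> mi (joint q \<alpha>) SS (\<lambda>z. (X1 z, X2 z)) Yv" using c3 e by linarith
  show ?thesis unfolding inner_obj_def Let_def
    using h1 h2 h3 h4 h5 by (simp only: min.bounded_iff)
qed

lemma inner_ub: "inner_obj C1 C2 q \<alpha> \<le> C1 + C2"
  unfolding inner_obj_def Let_def by simp

lemma ds_pmf: "r \<in> {0..1} \<Longrightarrow> is_pmf2 (ds r)"
  unfolding is_pmf2_def ds_def by auto

lemma ds_cont: "0 \<le> \<alpha> \<Longrightarrow> \<alpha> \<le> 1 \<Longrightarrow> continuous_on {0..1} (\<lambda>r. inner_obj C1 C2 (ds r) \<alpha>)"
proof -
  assume that: "0 \<le> \<alpha>" "\<alpha> \<le> 1"
  have jc: "continuous_on {0..1} (\<lambda>r. joint (ds r) \<alpha> z)" for z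
  proof -
    obtain x1 x2 y u where zd: "z = (x1,x2,y,u)" by (cases z) auto
    show ?thesis unfolding zd joint_def ds_def
      by (cases "x1 = x2") (auto intro!: continuous_intros)
  qed
  have E: "continuous_on {0..1} (\<lambda>r. ent (joint (ds r) \<alpha>) SS f)" for f :: "_ \<Rightarrow> 'x"
  proof (rule ent_cont[OF finite_SS jc])
    fix r z assume "r \<in> {0..1::real}" "z \<in> SS"
    then show "0 \<le> joint (ds r) \<alpha> z" using that by (intro joint_nn pmf_nn ds_pmf) auto
  qed
  show ?thesis unfolding inner_obj_def Let_def cmi_def mi_def
    by (intro continuous_intros E) auto
qed

lemma obj_mid:
  assumes "is_pmf2 q" "C1 \<ge> 0" "C2 \<ge> 0"
  shows "obj C1 C2 q \<le> obj C1 C2 (mid q)"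
  unfolding obj_def
proof (rule cINF_mono)
  show "{0..1/2::real} \<noteq> {}" by simp
  show "bdd_below (inner_obj C1 C2 q ` {0..1/2})"
    using inner_lb[OF assms(1) _ _ assms(2,3)] by (intro bdd_belowI[where m="- 6 * EB"]) auto
  fix m :: real assume "m \<in> {0..1/2}"
  then show "\<exists>n\<in>{0..1/2}. inner_obj C1 C2 q n \<le> inner_obj C1 C2 (mid q) m"
    using inner_mid[OF pmf_nn[OF assms(1)]] by (intro bexI[of _ m]) auto
qed

theorem lemma2:
  fixes C1 C2 :: real
  assumes "C1 \<ge> 0" and "C2 \<ge> 0"
  shows "\<exists>p. is_pmf2 p \<and> dsbs p \<and> (\<forall>q. is_pmf2 q \<longrightarrow> obj C1 C2 q \<le> obj C1 C2 p)"
proof -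
  have "\<exists>r\<in>{0..1}. \<forall>s\<in>{0..1}. (INF a\<in>{0..1/2}. inner_obj C1 C2 (ds s) a) \<le> (INF a\<in>{0..1/2}. inner_obj C1 C2 (ds r) a)"
  proof (rule usc_max)
    show "{0..1/2::real} \<noteq> {}" by simp
    show "continuous_on {0..1} (\<lambda>r. inner_obj C1 C2 (ds r) a)" if "a \<in> {0..1/2}" for a
      using that by (intro ds_cont) auto
    show "bdd_below ((\<lambda>a. inner_obj C1 C2 (ds r) a) ` {0..1/2})" if "r \<in> {0..1}" for r
      using inner_lb[OF ds_pmf[OF that] _ _ assms] by (intro bdd_belowI[where m="- 6 * EB"]) auto
    show "inner_obj C1 C2 (ds r) a \<le> C1 + C2" for r a by (rule inner_ub)
  qed
  then obtain r where r: "r \<in> {0..1}" "\<And>s. s \<in> {0..1} \<Longrightarrow> obj C1 C2 (ds s) \<le> obj C1 C2 (ds r)"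
    unfolding obj_def by blast
  have "is_pmf2 (ds r)" by (rule ds_pmf[OF r(1)])
  moreover have "dsbs (ds r)" unfolding dsbs_def ds_def by auto
  moreover have "obj C1 C2 q \<le> obj C1 C2 (ds r)" if q: "is_pmf2 q" for q
  proof -
    have "obj C1 C2 q \<le> obj C1 C2 (mid q)" by (rule obj_mid[OF q assms])
    also have "\<dots> = obj C1 C2 (ds (q 0 1 + q 1 0))" by (rule obj_cong) (rule mid_ds[OF q])
    also have "\<dots> \<le> obj C1 C2 (ds r)" 
    proof (rule r(2))
      show "q 0 1 + q 1 0 \<in> {0..1}" using q unfolding is_pmf2_def by auto
    qed
    finally show ?thesis .
  qed
  ultimately show ?thesis by blast
qed

end
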